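(* Let $G=(V_1\cup V_2,E)$ be a regular bipartite graph with stable sets satisfying $|V_1|=|V_2|=n$. If $G$ is not a mirror bipartite graph, then $n\ge 6$.
   Context: A bipartite graph $G=(V_1\cup V_2,E)$ with stable sets $V_1,V_2$ is mirror if there is a bijection $\varphi:V_1\to V_2$ such that for all $u,v\in V_1$, $u\varphi(v)\in E$ if and only if $\varphi(u)v\in E$. *)

theory Defs
  imports Main
begin

definition bipartite_graph :: "'a set \<Rightarrow> 'a set \<Rightarrow> 'a set set \<Rightarrow> bool" where
  "bipartite_graph V1 V2 E \<longleftrightarrow> finite V1 \<and> finite V2 \<and> V1 \<inter> V2 = {} \<and>
     (\<forall>e\<in>E. \<exists>u\<in>V1. \<exists>v\<in>V2. e = {u, v})"

definition degree :: "'a set set \<Rightarrow> 'a \<Rightarrow> nat" where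
  "degree E x = card {e \<in> E. x \<in> e}"

definition regular_graph :: "'a set \<Rightarrow> 'a set set \<Rightarrow> bool" where
  "regular_graph V E \<longleftrightarrow> (\<exists>k. \<forall>x\<in>V. degree E x = k)"

definition mirror :: "'a set \<Rightarrow> 'a set \<Rightarrow> 'a set set \<Rightarrow> bool" where
  "mirror V1 V2 E \<longleftrightarrow> (\<exists>\<phi>. bij_betw \<phi> V1 V2 \<and>
     (\<forall>u\<in>V1. \<forall>v\<in>V1. {u, \<phi> v} \<in> E \<longleftrightarrow> {\<phi> u, v} \<in> E))"

end

theory Submission
  imports Defs
begin

definition mir :: "'a set \<Rightarrow> 'b set \<Rightarrow> ('a \<Rightarrow> 'b \<Rightarrow> bool) \<Rightarrow> bool" where
  "mir V1 V2 A \<longleftrightarrow> (\<exists>\<phi>. bij_betw \<phi> V1 V2 \<and> (\<forall>u\<in>V1. \<forall>w\<in>V1. A u (\<phi> w) = A w (\<phi> u)))"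

lemma core:
  fixes V1 :: "'a set" and V2 :: "'b set" and A :: "'a \<Rightarrow> 'b \<Rightarrow> bool"
  assumes "finite V1" "finite V2" "card V1 = card V2"
    and "\<forall>u\<in>V1. card {v\<in>V2. A u v} = 2" "\<forall>v\<in>V2. card {u\<in>V1. A u v} = 2"
    and "x\<in>V1" "y\<in>V2" "A x y"
  shows "\<exists>\<phi>. bij_betw \<phi> V1 V2 \<and> \<phi> x = y \<and> (\<forall>u\<in>V1. \<forall>w\<in>V1. A u (\<phi> w) = A w (\<phi> u))"
  using assms
proof (induction "card V1" arbitrary: V1 V2 A x y rule: less_induct)
  case less
  note fin1 = less.prems(1) and fin2 = less.prems(2) and cd = less.prems(3)
    and d1 = less.prems(4) and d2 = less.prems(5) and xV = less.prems(6) and yV = less.prems(7)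
    and Axy = less.prems(8)
  obtain p q where pq: "{u\<in>V1. A u y} = {p,q}" "p \<noteq> q"
    using d2 yV by (metis card_2_iff)
  obtain u1 where u1: "u1 \<in> V1" "u1 \<noteq> x" "A u1 y" "{u\<in>V1. A u y} = {x,u1}"
  proof -
    have "x \<in> {p,q}" using pq xV Axy by blast
    then show ?thesis using pq that by blast
  qed
  obtain p q where pq: "{v\<in>V2. A x v} = {p,q}" "p \<noteq> q"
    using d1 xV by (metis card_2_iff)
  obtain v3 where v3: "v3 \<in> V2" "v3 \<noteq> y" "A x v3" "{v\<in>V2. A x v} = {y,v3}"
  proof -
    have "y \<in> {p,q}" using pq yV Axy by blast
    then show ?thesis using pq that by blast
  qed
  obtain p q where pq: "{v\<in>V2. A u1 v} = {p,q}" "p \<noteq> q"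
    using d1 u1 by (metis card_2_iff)
  obtain v4 where v4: "v4 \<in> V2" "v4 \<noteq> y" "A u1 v4" "{v\<in>V2. A u1 v} = {y,v4}"
  proof -
    have "y \<in> {p,q}" using pq yV u1 by blast
    then show ?thesis using pq that by blast
  qed
  obtain p q where pq: "{u\<in>V1. A u v3} = {p,q}" "p \<noteq> q"
    using d2 v3 by (metis card_2_iff)
  obtain u4 where u4: "u4 \<in> V1" "u4 \<noteq> x" "A u4 v3" "{u\<in>V1. A u v3} = {x,u4}"
  proof -
    have "x \<in> {p,q}" using pq xV v3 by blast
    then show ?thesis using pq that by blast
  qed
  have Ax: "\<And>v. v \<in> V2 \<Longrightarrow> A x v \<longleftrightarrow> v = y \<or> v = v3" using v3(4) by (auto simp: set_eq_iff)
  have Ay: "\<And>u. u \<in> V1 \<Longrightarrow> A u y \<longleftrightarrow> u = x \<or> u = u1" using u1(4) by (auto simp: set_eq_iff)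
  have Au1: "\<And>v. v \<in> V2 \<Longrightarrow> A u1 v \<longleftrightarrow> v = y \<or> v = v4" using v4(4) by (auto simp: set_eq_iff)
  have Av3: "\<And>u. u \<in> V1 \<Longrightarrow> A u v3 \<longleftrightarrow> u = x \<or> u = u4" using u4(4) by (auto simp: set_eq_iff)
  show ?case
  proof (cases "A u1 v3")
    case True
    hence v43: "v4 = v3" and u41: "u4 = u1" using Au1 v3 Av3 u1 v3 by auto
    define W1 where "W1 = V1 - {x,u1}"
    define W2 where "W2 = V2 - {y,v3}"
    have cW1: "card W1 = card V1 - 2" using u1 xV fin1 unfolding W1_def
      by (simp add: card_Diff_subset)
    have cW2: "card W2 = card V2 - 2" using v3 yV fin2 unfolding W2_def
      by (simp add: card_Diff_subset)
    have e1: "\<forall>u\<in>W1. {v\<in>W2. A u v} = {v\<in>V2. A u v}"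
      using Ay Av3 u41 unfolding W1_def W2_def by auto
    have e2: "\<forall>v\<in>W2. {u\<in>W1. A u v} = {u\<in>V1. A u v}"
      using Ax Au1 v43 unfolding W1_def W2_def by auto
    have dW1: "\<forall>u\<in>W1. card {v\<in>W2. A u v} = 2" using e1 d1 unfolding W1_def by auto
    have dW2: "\<forall>v\<in>W2. card {u\<in>W1. A u v} = 2" using e2 d2 unfolding W2_def by auto
    have fW1: "finite W1" and fW2: "finite W2" using fin1 fin2 W1_def W2_def by auto
    have cdW: "card W1 = card W2" using cW1 cW2 cd by simp
    have "card V1 > 0" using xV fin1 card_gt_0_iff by blast
    hence lt: "card W1 < card V1" using cW1 by simp
    obtain \<psi> where psi: "bij_betw \<psi> W1 W2" "\<forall>u\<in>W1. \<forall>w\<in>W1. A u (\<psi> w) = A w (\<psi> u)"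
    proof (cases "W1 = {}")
      case True
      hence "W2 = {}" using cdW fW2 by simp
      then show ?thesis using that True by (simp add: bij_betw_def)
    next
      case False
      then obtain a where a: "a \<in> W1" by blast
      hence "card {v\<in>W2. A a v} = 2" using dW1 by blast
      then obtain b where b: "b \<in> {v\<in>W2. A a v}" by (metis card_2_iff insertI1)
      from less.hyps[OF lt fW1 fW2 cdW dW1 dW2 a _ ] b
      show ?thesis using that by blast
    qed
    define \<phi> where "\<phi> = \<psi>(x := y, u1 := v3)"
    have bphi: "bij_betw \<phi> W1 W2" using psi(1) unfolding \<phi>_def W1_def
      by (rule bij_betw_cong[THEN iffD1, rotated]) auto
    have b2: "bij_betw \<phi> {x,u1} {y,v3}" using u1 v3 unfolding \<phi>_def bij_betw_def by auto
    have "bij_betw \<phi> (W1 \<union> {x,u1}) (W2 \<union> {y,v3})"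
      by (rule bij_betw_combine[OF bphi b2]) (auto simp: W2_def)
    moreover have "W1 \<union> {x,u1} = V1" "W2 \<union> {y,v3} = V2" using xV u1 yV v3 W1_def W2_def by auto
    ultimately have bij: "bij_betw \<phi> V1 V2" by simp
    have "\<forall>u\<in>V1. \<forall>w\<in>V1. A u (\<phi> w) = A w (\<phi> u)"
    proof (intro ballI)
      fix u w assume uV: "u \<in> V1" and wV: "w \<in> V1"
      have imW: "\<And>w. w \<in> W1 \<Longrightarrow> \<phi> w \<in> W2" using bphi bij_betwE by blast
      show "A u (\<phi> w) = A w (\<phi> u)"
      proof (cases "u \<in> W1")
        case uW: True
        show ?thesis
        proof (cases "w \<in> W1")
          case True
          then show ?thesis using uW psi(2) unfolding \<phi>_def W1_def by auto
        next
          case False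
          hence "w = x \<or> w = u1" using wV W1_def by auto
          moreover have "\<phi> u \<in> W2" using imW uW by blast
          ultimately show ?thesis using uW Ay Av3 u41 Ax Au1 v43 u1 unfolding \<phi>_def W1_def W2_def
            by auto
        qed
      next
        case uN: False
        hence uu: "u = x \<or> u = u1" using uV W1_def by auto
        show ?thesis
        proof (cases "w \<in> W1")
          case True
          have "\<phi> w \<in> W2" using imW True by blast
          then show ?thesis using uu True Ay Av3 u41 Ax Au1 v43 u1 unfolding \<phi>_def W1_def W2_def
            by auto
        next
          case False
          hence "w = x \<or> w = u1" using wV W1_def by auto
          then show ?thesis using uu Axy True v43 v4 u1 v3 unfolding \<phi>_def by auto
        qed
      qed
    qed
    then show ?thesis using bij u1 by (auto simp: \<phi>_def)
  next
    case False
    define W1 where "W1 = V1 - {x}"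
    define W2 where "W2 = V2 - {y}"
    define B where "B = (\<lambda>a b. A a b \<or> (a = u1 \<and> b = v3))"
    have fW1: "finite W1" and fW2: "finite W2" using fin1 fin2 W1_def W2_def by auto
    have cdW: "card W1 = card W2" using cd xV yV fin1 fin2 W1_def W2_def by simp
    have lt: "card W1 < card V1" unfolding W1_def using fin1 xV by (rule card_Diff1_less)
    have v34: "v4 \<noteq> v3" using False v4 by auto
    have u4x: "u4 \<noteq> u1" using False u4 by auto
    have dW1: "\<forall>u\<in>W1. card {v\<in>W2. B u v} = 2"
    proof
      fix a assume a: "a \<in> W1"
      show "card {v\<in>W2. B a v} = 2"
      proof (cases "a = u1")
        case True
        have "{v\<in>W2. B a v} = {v4, v3}" using True Au1 v4 v3 unfolding W2_def B_def by auto
        then show ?thesis using v34 by simp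
      next
        case False
        have "{v\<in>W2. B a v} = {v\<in>V2. A a v}" using False a Ay unfolding W1_def W2_def B_def by auto
        then show ?thesis using d1 a W1_def by auto
      qed
    qed
    have dW2: "\<forall>v\<in>W2. card {u\<in>W1. B u v} = 2"
    proof
      fix b assume b: "b \<in> W2"
      show "card {u\<in>W1. B u b} = 2"
      proof (cases "b = v3")
        case True
        have "{u\<in>W1. B u b} = {u4, u1}" using True Av3 u4 u1 unfolding W1_def B_def by auto
        then show ?thesis using u4x by simp
      next
        case False
        have "{u\<in>W1. B u b} = {u\<in>V1. A u b}" using False b Ax unfolding W1_def W2_def B_def by auto
        then show ?thesis using d2 b W2_def by auto
      qed
    qed
    have u1W: "u1 \<in> W1" using u1 W1_def by auto
    have v3W: "v3 \<in> W2" using v3 W2_def by auto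
    obtain \<psi> where psi: "bij_betw \<psi> W1 W2" "\<psi> u1 = v3" "\<forall>u\<in>W1. \<forall>w\<in>W1. B u (\<psi> w) = B w (\<psi> u)"
      using less.hyps[OF lt fW1 fW2 cdW dW1 dW2 u1W v3W] unfolding B_def by blast
    define \<phi> where "\<phi> = \<psi>(x := y)"
    have bphi: "bij_betw \<phi> W1 W2" using psi(1) unfolding \<phi>_def W1_def
      by (rule bij_betw_cong[THEN iffD1, rotated]) auto
    have b2: "bij_betw \<phi> {x} {y}" unfolding \<phi>_def bij_betw_def by auto
    have "bij_betw \<phi> (W1 \<union> {x}) (W2 \<union> {y})"
      by (rule bij_betw_combine[OF bphi b2]) (auto simp: W2_def)
    moreover have "W1 \<union> {x} = V1" "W2 \<union> {y} = V2" using xV yV W1_def W2_def by auto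
    ultimately have bij: "bij_betw \<phi> V1 V2" by simp
    have inj: "\<And>w. w \<in> W1 \<Longrightarrow> \<psi> w = v3 \<longleftrightarrow> w = u1"
      using psi(1,2) u1W by (metis bij_betw_iff_bijections)
    have imW: "\<And>w. w \<in> W1 \<Longrightarrow> \<psi> w \<in> W2" using psi(1) bij_betwE by blast
    have "\<forall>u\<in>V1. \<forall>w\<in>V1. A u (\<phi> w) = A w (\<phi> u)"
    proof (intro ballI)
      fix u w assume uV: "u \<in> V1" and wV: "w \<in> V1"
      show "A u (\<phi> w) = A w (\<phi> u)"
      proof (cases "u = x")
        case ux: True
        show ?thesis
        proof (cases "w = x")
          case True then show ?thesis using ux by simp
        next
          case False
          hence wW: "w \<in> W1" using wV W1_def by auto
          have "\<psi> w \<in> W2" using imW wW by blast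
          then show ?thesis using ux False Ax Ay inj wW wV unfolding \<phi>_def W2_def by auto
        qed
      next
        case uN: False
        hence uW: "u \<in> W1" using uV W1_def by auto
        show ?thesis
        proof (cases "w = x")
          case True
          have "\<psi> u \<in> W2" using imW uW by blast
          then show ?thesis using uN True Ax Ay inj uW uV unfolding \<phi>_def W2_def by auto
        next
          case wN: False
          hence wW: "w \<in> W1" using wV W1_def by auto
          have "B u (\<psi> w) = B w (\<psi> u)" using psi(3) uW wW by blast
          then show ?thesis using uN wN inj uW wW unfolding \<phi>_def B_def by auto
        qed
      qed
    qed
    then show ?thesis using bij by (auto simp: \<phi>_def)
  qed
qed


lemma mir_empty: "V1 = {} \<Longrightarrow> V2 = {} \<Longrightarrow> mir V1 V2 A"
  unfolding mir_def by (auto simp: bij_betw_def)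

lemma mir_compl: "mir V1 V2 (\<lambda>u v. \<not> A u v) \<Longrightarrow> mir V1 V2 A"
  unfolding mir_def by auto

lemma reg2:
  assumes "finite V1" "finite V2" "card V1 = card V2"
    and "\<forall>u\<in>V1. card {v\<in>V2. A u v} = 2" "\<forall>v\<in>V2. card {u\<in>V1. A u v} = 2"
  shows "mir V1 V2 A"
proof (cases "V1 = {}")
  case True
  then show ?thesis using assms(2,3) mir_empty by auto
next
  case False
  then obtain x where x: "x \<in> V1" by blast
  hence "card {v\<in>V2. A x v} = 2" using assms(4) by blast
  then obtain y where "y \<in> {v\<in>V2. A x v}" by (metis card_2_iff insertI1)
  then show ?thesis using core[OF assms x] unfolding mir_def by blast
qed

lemma reg0:
  assumes "finite V1" "finite V2" "card V1 = card V2"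
    and "\<forall>u\<in>V1. card {v\<in>V2. A u v} = 0"
  shows "mir V1 V2 A"
proof -
  obtain h where h: "bij_betw h V1 V2" using finite_same_card_bij assms(1-3) by blast
  have "\<forall>u\<in>V1. \<forall>w\<in>V1. \<not> A u (h w)"
  proof (intro ballI)
    fix u w assume "u \<in> V1" "w \<in> V1"
    moreover have "h w \<in> V2" using h \<open>w \<in> V1\<close> bij_betwE by blast
    ultimately show "\<not> A u (h w)" using assms(2,4) by auto
  qed
  then show ?thesis unfolding mir_def using h by blast
qed

lemma reg1:
  assumes "finite V1" "finite V2" "card V1 = card V2"
    and d1: "\<forall>u\<in>V1. card {v\<in>V2. A u v} = 1" and d2: "\<forall>v\<in>V2. card {u\<in>V1. A u v} = 1"
  shows "mir V1 V2 A"
proof -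
  have "\<forall>u\<in>V1. \<exists>v. {v\<in>V2. A u v} = {v}" using d1 by (simp add: card_1_singleton_iff)
  then obtain \<phi> where phi: "\<forall>u\<in>V1. {v\<in>V2. A u v} = {\<phi> u}" by metis
  have p1: "\<And>u. u \<in> V1 \<Longrightarrow> \<phi> u \<in> V2 \<and> A u (\<phi> u)" using phi by (metis (no_types, lifting) insertI1 mem_Collect_eq)
  have uq: "\<And>v u u'. v \<in> V2 \<Longrightarrow> u \<in> V1 \<Longrightarrow> u' \<in> V1 \<Longrightarrow> A u v \<Longrightarrow> A u' v \<Longrightarrow> u = u'"
  proof -
    fix v u u' assume "v \<in> V2" "u \<in> V1" "u' \<in> V1" "A u v" "A u' v"
    moreover obtain z where "{u\<in>V1. A u v} = {z}" using d2 \<open>v \<in> V2\<close> by (metis card_1_singleton_iff One_nat_def)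
    ultimately have "u \<in> {z}" "u' \<in> {z}" by (blast, blast)
    then show "u = u'" by simp
  qed
  have inj: "inj_on \<phi> V1" unfolding inj_on_def using p1 uq by metis
  have sub: "\<phi> ` V1 \<subseteq> V2" using p1 by blast
  have "card (\<phi> ` V1) = card V2" using card_image[OF inj] assms(3) by simp
  hence "\<phi> ` V1 = V2" using card_subset_eq[OF assms(2) sub] by simp
  hence bij: "bij_betw \<phi> V1 V2" using inj bij_betw_def by blast
  have "\<forall>u\<in>V1. \<forall>w\<in>V1. A u (\<phi> w) \<longleftrightarrow> u = w"
    using p1 uq by metis
  then show ?thesis unfolding mir_def using bij by metis
qed

lemma gen:
  assumes f1: "finite V1" and f2: "finite V2" and c1: "card V1 = n" and c2: "card V2 = n" and n5: "n \<le> 5"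
    and d1: "\<forall>u\<in>V1. card {v\<in>V2. A u v} = k" and d2: "\<forall>v\<in>V2. card {u\<in>V1. A u v} = k"
  shows "mir V1 V2 A"
proof (cases "V1 = {}")
  case True
  then show ?thesis using f2 c1 c2 mir_empty by auto
next
  case False
  then obtain x where x: "x \<in> V1" by blast
  have "card {v\<in>V2. A x v} \<le> card V2" using f2 by (intro card_mono) auto
  hence kn: "k \<le> n" using d1 x c2 by auto
  have cc: "card V1 = card V2" using c1 c2 by simp
  have e1: "\<forall>u\<in>V1. card {v\<in>V2. \<not> A u v} = n - k"
  proof
    fix u assume u: "u \<in> V1"
    have "{v\<in>V2. \<not> A u v} = V2 - {v\<in>V2. A u v}" by auto
    then show "card {v\<in>V2. \<not> A u v} = n - k" using card_Diff_subset[of "{v\<in>V2. A u v}" V2] f2 d1 u c2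
      by auto
  qed
  have e2: "\<forall>v\<in>V2. card {u\<in>V1. \<not> A u v} = n - k"
  proof
    fix v assume v: "v \<in> V2"
    have "{u\<in>V1. \<not> A u v} = V1 - {u\<in>V1. A u v}" by auto
    then show "card {u\<in>V1. \<not> A u v} = n - k" using card_Diff_subset[of "{u\<in>V1. A u v}" V1] f1 d2 v c1
      by auto
  qed
  have "k = 0 \<or> k = 1 \<or> k = 2 \<or> n - k = 0 \<or> n - k = 1 \<or> n - k = 2" using kn n5 by arith
  moreover
  { assume "k = 0" hence ?thesis using reg0[OF f1 f2 cc] d1 by simp }
  moreover
  { assume "k = 1" hence ?thesis using reg1[OF f1 f2 cc] d1 d2 by simp }
  moreover
  { assume "k = 2" hence ?thesis using reg2[OF f1 f2 cc] d1 d2 by simp }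
  moreover
  { assume "n - k = 0" hence ?thesis using reg0[OF f1 f2 cc, of "\<lambda>u v. \<not> A u v"] e1 mir_compl by simp }
  moreover
  { assume "n - k = 1" hence ?thesis using reg1[OF f1 f2 cc, of "\<lambda>u v. \<not> A u v"] e1 e2 mir_compl by simp }
  moreover
  { assume "n - k = 2" hence ?thesis using reg2[OF f1 f2 cc, of "\<lambda>u v. \<not> A u v"] e1 e2 mir_compl by simp }
  ultimately show ?thesis by blast
qed

lemma deg1:
  assumes "bipartite_graph V1 V2 E" "u \<in> V1"
  shows "degree E u = card {v\<in>V2. {u,v} \<in> E}"
proof -
  have "{e\<in>E. u \<in> e} = (\<lambda>v. {u,v}) ` {v\<in>V2. {u,v} \<in> E}"
  proof
    show "{e\<in>E. u \<in> e} \<subseteq> (\<lambda>v. {u,v}) ` {v\<in>V2. {u,v} \<in> E}"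
    proof
      fix e assume e: "e \<in> {e\<in>E. u \<in> e}"
      then obtain a b where ab: "a \<in> V1" "b \<in> V2" "e = {a,b}" using assms(1) unfolding bipartite_graph_def by blast
      have "u \<noteq> b" using assms ab unfolding bipartite_graph_def by blast
      hence "u = a" using e ab by auto
      then show "e \<in> (\<lambda>v. {u,v}) ` {v\<in>V2. {u,v} \<in> E}" using ab e by auto
    qed
  qed auto
  moreover have "inj_on (\<lambda>v. {u,v}) {v\<in>V2. {u,v} \<in> E}"
    using assms unfolding inj_on_def bipartite_graph_def by (auto simp: doubleton_eq_iff)
  ultimately show ?thesis unfolding degree_def by (simp add: card_image)
qed

lemma deg2:
  assumes "bipartite_graph V1 V2 E" "v \<in> V2"
  shows "degree E v = card {u\<in>V1. {u,v} \<in> E}"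
proof -
  have "{e\<in>E. v \<in> e} = (\<lambda>u. {u,v}) ` {u\<in>V1. {u,v} \<in> E}"
  proof
    show "{e\<in>E. v \<in> e} \<subseteq> (\<lambda>u. {u,v}) ` {u\<in>V1. {u,v} \<in> E}"
    proof
      fix e assume e: "e \<in> {e\<in>E. v \<in> e}"
      then obtain a b where ab: "a \<in> V1" "b \<in> V2" "e = {a,b}" using assms(1) unfolding bipartite_graph_def by blast
      have "v \<noteq> a" using assms ab unfolding bipartite_graph_def by blast
      hence "v = b" using e ab by auto
      then show "e \<in> (\<lambda>u. {u,v}) ` {u\<in>V1. {u,v} \<in> E}" using ab e by auto
    qed
  qed auto
  moreover have "inj_on (\<lambda>u. {u,v}) {u\<in>V1. {u,v} \<in> E}"
    using assms unfolding inj_on_def bipartite_graph_def by (auto simp: doubleton_eq_iff)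
  ultimately show ?thesis unfolding degree_def by (simp add: card_image)
qed

theorem proposition1:
  fixes V1 V2 :: "'a set" and E :: "'a set set" and n :: nat
  assumes "bipartite_graph V1 V2 E"
    and "regular_graph (V1 \<union> V2) E"
    and "card V1 = n" and "card V2 = n"
    and "\<not> mirror V1 V2 E"
  shows "n \<ge> 6"
proof (rule ccontr)
  assume "\<not> n \<ge> 6"
  hence n5: "n \<le> 5" by simp
  obtain k where k: "\<forall>x\<in>V1 \<union> V2. degree E x = k" using assms(2) unfolding regular_graph_def by blast
  have f: "finite V1" "finite V2" using assms(1) unfolding bipartite_graph_def by auto
  have d1: "\<forall>u\<in>V1. card {v\<in>V2. {u,v} \<in> E} = k" using k deg1[OF assms(1)] by auto
  have d2: "\<forall>v\<in>V2. card {u\<in>V1. {u,v} \<in> E} = k" using k deg2[OF assms(1)] by auto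
  have "mir V1 V2 (\<lambda>x y. {x,y} \<in> E)" using gen[OF f assms(3,4) n5 d1 d2] .
  then have "mirror V1 V2 E" unfolding mir_def mirror_def by (auto simp: insert_commute)
  then show False using assms(5) by simp
qed

end
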